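(* Let $p,q$ be positive integers, $n=p+q$, and let $M$ be an $n\times n$ complex matrix with $M=M^*$ and $M^*I_{p,q}M=I_{p,q}$. If $\lambda\neq 0$ is an eigenvalue of $M+I_{p,q}$, then $|\lambda|\geq 2$.
   Context: $I_{p,q}=\mathrm{diag}\{I_p,-I_q\}$, where $I_p$ is the $p\times p$ identity matrix; $M^*$ denotes the conjugate transpose. *)

theory Defs
  imports "Jordan_Normal_Form.Schur_Decomposition"
begin

definition Ipq :: "nat \<Rightarrow> nat \<Rightarrow> complex mat" where
  "Ipq p q = mat (p + q) (p + q) (\<lambda>(i, j). if i = j then (if i < p then 1 else -1) else 0)"

end

theory Submission
  imports Defs
begin

lemma Ipq_carrier: "Ipq p q \<in> carrier_mat (p+q) (p+q)"
  unfolding Ipq_def by auto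

lemma Ipq_sq: "Ipq p q * Ipq p q = 1\<^sub>m (p+q)"
proof (rule eq_matI)
  fix i j assume i: "i < dim_row (1\<^sub>m (p+q) :: complex mat)" and j: "j < dim_col (1\<^sub>m (p+q) :: complex mat)"
  have "(Ipq p q * Ipq p q) $$ (i,j) = (\<Sum>k<p+q. Ipq p q $$ (i,k) * Ipq p q $$ (k,j))"
    using i j by (simp add: Ipq_def scalar_prod_def atLeast0LessThan)
  also have "\<dots> = (\<Sum>k\<in>{i}. Ipq p q $$ (i,k) * Ipq p q $$ (k,j))"
    using i j by (intro sum.mono_neutral_right) (auto simp: Ipq_def)
  also have "\<dots> = 1\<^sub>m (p+q) $$ (i,j)" using i j by (auto simp: Ipq_def)
  finally show "(Ipq p q * Ipq p q) $$ (i,j) = 1\<^sub>m (p+q) $$ (i,j)" .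
qed (simp_all add: Ipq_def)

lemma Ipq_mult_vec:
  assumes "v \<in> carrier_vec (p+q)" "i < p+q"
  shows "(Ipq p q *\<^sub>v v) $ i = complex_of_real (if i < p then 1 else -1) * v $ i"
proof -
  have "(Ipq p q *\<^sub>v v) $ i = (\<Sum>k<p+q. Ipq p q $$ (i,k) * v $ k)"
    using assms by (simp add: Ipq_def scalar_prod_def atLeast0LessThan)
  also have "\<dots> = (\<Sum>k\<in>{i}. Ipq p q $$ (i,k) * v $ k)"
    using assms by (intro sum.mono_neutral_right) (auto simp: Ipq_def)
  finally show ?thesis using assms by (auto simp: Ipq_def)
qed

theorem corollary3p5:
  fixes p q n :: nat and M :: "complex mat" and l :: complex
  assumes "p > 0" and "q > 0" and "n = p + q"
    and "M \<in> carrier_mat n n"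
    and "mat_adjoint M = M"
    and "mat_adjoint M * Ipq p q * M = Ipq p q"
    and "l \<noteq> 0"
    and "eigenvalue (M + Ipq p q) l"
  shows "cmod l \<ge> 2"
proof -
  define J where "J = Ipq p q"
  have Mc: "M \<in> carrier_mat n n" using assms by simp
  have Jc: "J \<in> carrier_mat n n" using Ipq_carrier assms(3) J_def by simp
  have JJ: "J * J = 1\<^sub>m n" using Ipq_sq assms(3) J_def by simp
  have MJM: "M * J * M = J" using assms(5,6) J_def by simp
  have herm: "\<And>i j. i < n \<Longrightarrow> j < n \<Longrightarrow> M $$ (i,j) = cnj (M $$ (j,i))"
  proof -
    fix i j assume "i < n" "j < n"
    hence "mat_adjoint M $$ (i,j) = cnj (M $$ (j,i))"
      using Mc unfolding mat_adjoint_def by (simp add: mat_of_rows_def)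
    thus "M $$ (i,j) = cnj (M $$ (j,i))" using assms(5) by simp
  qed
  define A where "A = M + J"
  have Ac: "A \<in> carrier_mat n n" using Mc Jc A_def by simp
  have key: "M * J * A = A"
  proof -
    have "M * J * A = M * J * M + M * J * J"
      unfolding A_def using Mc Jc by (simp add: mult_add_distrib_mat[of _ n n])
    also have "M * J * J = M * (J * J)" using Mc Jc by (simp add: assoc_mult_mat[of _ n n])
    also have "\<dots> = M" using JJ Mc by simp
    finally show ?thesis using MJM A_def Mc Jc by (simp add: comm_add_mat)
  qed
  obtain v where ev: "eigenvector A v l" using assms(8) A_def J_def unfolding eigenvalue_def by auto
  have vc: "v \<in> carrier_vec n" and v0: "v \<noteq> 0\<^sub>v n" and Av: "A *\<^sub>v v = l \<cdot>\<^sub>v v"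
    using ev Ac unfolding eigenvector_def by auto
  have MJv: "M *\<^sub>v (J *\<^sub>v v) = v"
  proof -
    have "l \<cdot>\<^sub>v (M *\<^sub>v (J *\<^sub>v v)) = M *\<^sub>v (J *\<^sub>v (A *\<^sub>v v))"
      using Av Mc Jc vc by (simp add: mult_mat_vec)
    also have "\<dots> = (M * J * A) *\<^sub>v v"
      using Mc Jc Ac vc by (simp add: assoc_mult_mat_vec[of _ n n _ n])
    also have "\<dots> = l \<cdot>\<^sub>v v" using key Av by simp
    finally have "l \<cdot>\<^sub>v (M *\<^sub>v (J *\<^sub>v v)) = l \<cdot>\<^sub>v v" .
    hence eqv: "l \<cdot>\<^sub>v (M *\<^sub>v (J *\<^sub>v v)) = l \<cdot>\<^sub>v v" .
    have "\<And>i. i < n \<Longrightarrow> (M *\<^sub>v (J *\<^sub>v v)) $ i = v $ i"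
    proof -
      fix i assume i: "i < n"
      have "(l \<cdot>\<^sub>v (M *\<^sub>v (J *\<^sub>v v))) $ i = (l \<cdot>\<^sub>v v) $ i" using eqv by simp
      hence "l * (M *\<^sub>v (J *\<^sub>v v)) $ i = l * v $ i" using i Mc vc by simp
      thus "(M *\<^sub>v (J *\<^sub>v v)) $ i = v $ i" using assms(7) by simp
    qed
    thus ?thesis using Mc vc by (intro eq_vecI) auto
  qed
  define w where "w = J *\<^sub>v v"
  define d where "d = (\<lambda>i. if i < p then (1::real) else -1)"
  have d2: "\<And>i. d i * d i = 1" unfolding d_def by auto
  have wi: "\<And>i. i < n \<Longrightarrow> w $ i = of_real (d i) * v $ i"
    unfolding w_def J_def d_def using Ipq_mult_vec[of v p q] vc assms(3) by simp
  have Mvi: "\<And>u i. u \<in> carrier_vec n \<Longrightarrow> i < n \<Longrightarrow> (M *\<^sub>v u) $ i = (\<Sum>j<n. M $$ (i,j) * u $ j)"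
    using Mc by (simp add: scalar_prod_def atLeast0LessThan)
  have AvM: "A *\<^sub>v v = M *\<^sub>v v + w"
    unfolding A_def w_def using Mc Jc vc by (simp add: add_mult_distrib_mat_vec)
  have eig: "\<And>i. i < n \<Longrightarrow> (M *\<^sub>v v) $ i + w $ i = l * v $ i"
  proof -
    fix i assume i: "i < n"
    have "(A *\<^sub>v v) $ i = (M *\<^sub>v v) $ i + w $ i"
      unfolding AvM using i Mc vc w_def Jc by simp
    thus "(M *\<^sub>v v) $ i + w $ i = l * v $ i" using Av i vc by simp
  qed
  have wc: "w \<in> carrier_vec n" unfolding w_def using Jc vc by simp
  have Mw: "\<And>j. j < n \<Longrightarrow> (\<Sum>i<n. M $$ (j,i) * w $ i) = v $ j"
    using MJv Mvi[OF wc] unfolding w_def by simp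
  define S where "S = (\<Sum>i<n. (cmod (v $ i))^2)"
  define X where "X = (\<Sum>i<n. d i * (cmod (v $ i))^2)"
  have e1: "(\<Sum>i<n. (M *\<^sub>v v) $ i * cnj (w $ i)) = of_real S"
  proof -
    have "(\<Sum>i<n. (M *\<^sub>v v) $ i * cnj (w $ i)) = (\<Sum>i<n. \<Sum>j<n. M $$ (i,j) * v $ j * cnj (w $ i))"
      by (intro sum.cong refl) (simp add: Mvi[OF vc] sum_distrib_right)
    also have "\<dots> = (\<Sum>j<n. \<Sum>i<n. M $$ (i,j) * v $ j * cnj (w $ i))"
      by (rule sum.swap)
    also have "\<dots> = (\<Sum>j<n. v $ j * cnj (\<Sum>i<n. M $$ (j,i) * w $ i))"
    proof (intro sum.cong refl)
      fix j assume "j \<in> {..<n}"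
      hence j: "j < n" by simp
      have "cnj (\<Sum>i<n. M $$ (j,i) * w $ i) = (\<Sum>i<n. cnj (M $$ (j,i)) * cnj (w $ i))"
        by simp
      also have "\<dots> = (\<Sum>i<n. M $$ (i,j) * cnj (w $ i))"
      proof (intro sum.cong refl)
        fix i assume "i \<in> {..<n}"
        hence i: "i < n" by simp
        show "cnj (M $$ (j,i)) * cnj (w $ i) = M $$ (i,j) * cnj (w $ i)"
          by (simp add: herm[OF i j])
      qed
      finally have c: "cnj (\<Sum>i<n. M $$ (j,i) * w $ i) = (\<Sum>i<n. M $$ (i,j) * cnj (w $ i))" .
      show "(\<Sum>i<n. M $$ (i,j) * v $ j * cnj (w $ i)) = v $ j * cnj (\<Sum>i<n. M $$ (j,i) * w $ i)"
        unfolding c sum_distrib_left by (intro sum.cong refl) (simp add: mult_ac)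
    qed
    also have "\<dots> = (\<Sum>j<n. v $ j * cnj (v $ j))"
      using Mw by simp
    also have "\<dots> = of_real S" unfolding S_def
      by (simp add: complex_norm_square[symmetric])
    finally show ?thesis .
  qed
  have e2: "(\<Sum>i<n. w $ i * cnj (w $ i)) = of_real S"
  proof -
    have "(\<Sum>i<n. w $ i * cnj (w $ i)) = (\<Sum>i<n. of_real (d i * d i) * (v $ i * cnj (v $ i)))"
      by (intro sum.cong refl) (simp add: wi mult_ac)
    also have "\<dots> = of_real S" unfolding S_def d2
      by (simp add: complex_norm_square[symmetric])
    finally show ?thesis .
  qed
  have e3: "(\<Sum>i<n. v $ i * cnj (w $ i)) = of_real X"
  proof -
    have "(\<Sum>i<n. v $ i * cnj (w $ i)) = (\<Sum>i<n. of_real (d i) * (v $ i * cnj (v $ i)))"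
      by (intro sum.cong refl) (simp add: wi mult_ac)
    also have "\<dots> = of_real X" unfolding X_def
      by (simp add: complex_norm_square[symmetric])
    finally show ?thesis .
  qed
  have "(\<Sum>i<n. ((M *\<^sub>v v) $ i + w $ i) * cnj (w $ i)) = (\<Sum>i<n. l * (v $ i * cnj (w $ i)))"
    by (intro sum.cong refl) (simp add: eig mult.assoc)
  moreover have "(\<Sum>i<n. ((M *\<^sub>v v) $ i + w $ i) * cnj (w $ i)) = of_real S + of_real S"
    unfolding distrib_right sum.distrib e1 e2 ..
  moreover have "(\<Sum>i<n. l * (v $ i * cnj (w $ i))) = l * of_real X"
    unfolding sum_distrib_left[symmetric] e3 ..
  ultimately have lX: "l * of_real X = of_real (2 * S)" by simp
  have Spos: "S > 0"
  proof -
    have "\<exists>i<n. v $ i \<noteq> 0"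
    proof (rule ccontr)
      assume "\<not> (\<exists>i<n. v $ i \<noteq> 0)"
      hence "v = 0\<^sub>v n" using vc by (intro eq_vecI) auto
      with v0 show False by simp
    qed
    then obtain i where i: "i < n" "v $ i \<noteq> 0" by blast
    have "(cmod (v $ i))^2 \<le> S" unfolding S_def
      using i by (intro member_le_sum) auto
    moreover have "(cmod (v $ i))^2 > 0" using i by simp
    ultimately show ?thesis by linarith
  qed
  have XS: "\<bar>X\<bar> \<le> S"
  proof -
    have "\<bar>X\<bar> \<le> (\<Sum>i<n. \<bar>d i * (cmod (v $ i))^2\<bar>)" unfolding X_def by (rule sum_abs)
    also have "\<dots> = S" unfolding S_def by (intro sum.cong refl) (simp add: d_def abs_mult)
    finally show ?thesis .
  qed
  have "cmod l * \<bar>X\<bar> = 2 * S"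
  proof -
    have "cmod (l * of_real X) = cmod (of_real (2 * S))" using lX by simp
    thus ?thesis using Spos by (simp add: norm_mult)
  qed
  moreover have "cmod l * \<bar>X\<bar> \<le> cmod l * S" by (rule mult_left_mono[OF XS norm_ge_zero])
  ultimately have "2 * S \<le> cmod l * S" by simp
  thus ?thesis using Spos by (rule mult_right_le_imp_le)
qed

end
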